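(* For $D=(\mu,\mathcal{A},\mathcal{B},\mathcal{F})\in\mathcal{BV}(\Omega)$ define the pseudo-analytic mass $\mathcal{M}(D):=\int_\Omega\frac{|\mathcal{B}|^2}{1-|\mu|^2}\,dx\,dy\in[0,\infty]$. If $D_1\sim D_2$ (gauge-diffeomorphism equivalence), then $\mathcal{M}(D_1)=\mathcal{M}(D_2)$.
   Context: A domain is an open connected subset of $\mathbb{C}$, $z=x+iy$. $\mathcal{BV}(\Omega)$ is the set of quadruples $(\mu,\mathcal{A},\mathcal{B},\mathcal{F})$ of continuous complex functions on $\Omega$ with $|\mu|<1$ pointwise. Gauge action: for a $C^1$ nowhere-vanishing $\phi$ on $\Omega$, $\phi\cdot(\mu,\mathcal{A},\mathcal{B},\mathcal{F})=(\mu,\ \mathcal{A}-\phi_{\bar z}/\phi+\mu\phi_z/\phi,\ \mathcal{B}\phi/\bar\phi,\ \phi\mathcal{F})$; $D_1\sim_g D_2$ iff $\phi\cdot D_1=D_2$ for some such $\phi$. Diffeomorphism: $C^1$ bijection $\Phi:\Omega_1\to\Omega_2$ with $C^1$ inverse and $J=|\Phi_z|^2-|\Phi_{\bar z}|^2>0$; for $D\in\mathcal{BV}(\Omega_2)$, with $K=\Phi_z+(\mu\circ\Phi)\overline{\Phi_{\bar z}}$, $\Phi^*D=((\Phi_{\bar z}+(\mu\circ\Phi)\overline{\Phi_z})/K,\ J(\mathcal{A}\circ\Phi)/K,\ J(\mathcal{B}\circ\Phi)/K,\ J(\mathcal{F}\circ\Phi)/K)$; $D_1\sim_d D_2$ iff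 $D_1=\Phi^*D_2$ for some diffeomorphism $\Phi$. The relation $\sim$ is the equivalence relation generated by $\sim_g$ and $\sim_d$ (finite chains of such steps), on the disjoint union of all $\mathcal{BV}(\Omega)$. *)

theory Defs
  imports "HOL-Analysis.Analysis"
begin

definition is_domain :: "complex set \<Rightarrow> bool" where
  "is_domain \<Omega> \<longleftrightarrow> open \<Omega> \<and> connected \<Omega> \<and> \<Omega> \<noteq> {}"

definition pdx :: "(complex \<Rightarrow> complex) \<Rightarrow> complex \<Rightarrow> complex" where
  "pdx f z = frechet_derivative f (at z) 1"
definition pdy :: "(complex \<Rightarrow> complex) \<Rightarrow> complex \<Rightarrow> complex" where
  "pdy f z = frechet_derivative f (at z) \<i>"
definition dz :: "(complex \<Rightarrow> complex) \<Rightarrow> complex \<Rightarrow> complex" where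
  "dz f z = (pdx f z - \<i> * pdy f z) / 2"
definition dzb :: "(complex \<Rightarrow> complex) \<Rightarrow> complex \<Rightarrow> complex" where
  "dzb f z = (pdx f z + \<i> * pdy f z) / 2"

definition C1_on :: "complex set \<Rightarrow> (complex \<Rightarrow> complex) \<Rightarrow> bool" where
  "C1_on \<Omega> f \<longleftrightarrow> f differentiable_on \<Omega> \<and>
     continuous_on \<Omega> (pdx f) \<and> continuous_on \<Omega> (pdy f)"

text \<open>Quadruples (mu, A, B, F) of complex functions; only values on the domain matter.\<close>
type_synonym quad = "(complex \<Rightarrow> complex) \<times> (complex \<Rightarrow> complex) \<times>
                     (complex \<Rightarrow> complex) \<times> (complex \<Rightarrow> complex)"

definition BV :: "complex set \<Rightarrow> quad \<Rightarrow> bool" where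
  "BV \<Omega> D \<longleftrightarrow> (case D of (\<mu>, A, B, F) \<Rightarrow>
     continuous_on \<Omega> \<mu> \<and> continuous_on \<Omega> A \<and> continuous_on \<Omega> B \<and> continuous_on \<Omega> F \<and>
     (\<forall>z\<in>\<Omega>. cmod (\<mu> z) < 1))"

definition gauge_act :: "(complex \<Rightarrow> complex) \<Rightarrow> quad \<Rightarrow> quad" where
  "gauge_act \<phi> D = (case D of (\<mu>, A, B, F) \<Rightarrow>
     (\<mu>,
      (\<lambda>z. A z - dzb \<phi> z / \<phi> z + \<mu> z * dz \<phi> z / \<phi> z),
      (\<lambda>z. B z * \<phi> z / cnj (\<phi> z)),
      (\<lambda>z. \<phi> z * F z)))"

definition jac :: "(complex \<Rightarrow> complex) \<Rightarrow> complex \<Rightarrow> real" where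
  "jac \<Phi> z = (cmod (dz \<Phi> z))\<^sup>2 - (cmod (dzb \<Phi> z))\<^sup>2"

definition pullback :: "(complex \<Rightarrow> complex) \<Rightarrow> quad \<Rightarrow> quad" where
  "pullback \<Phi> D = (case D of (\<mu>, A, B, F) \<Rightarrow>
     (let K = (\<lambda>z. dz \<Phi> z + \<mu> (\<Phi> z) * cnj (dzb \<Phi> z)) in
     ((\<lambda>z. (dzb \<Phi> z + \<mu> (\<Phi> z) * cnj (dz \<Phi> z)) / K z),
      (\<lambda>z. of_real (jac \<Phi> z) * A (\<Phi> z) / K z),
      (\<lambda>z. of_real (jac \<Phi> z) * B (\<Phi> z) / K z),
      (\<lambda>z. of_real (jac \<Phi> z) * F (\<Phi> z) / K z))))"

definition diffeo :: "complex set \<Rightarrow> complex set \<Rightarrow> (complex \<Rightarrow> complex) \<Rightarrow> bool" where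
  "diffeo \<Omega>1 \<Omega>2 \<Phi> \<longleftrightarrow> bij_betw \<Phi> \<Omega>1 \<Omega>2 \<and> C1_on \<Omega>1 \<Phi> \<and>
     (\<exists>\<Psi>. C1_on \<Omega>2 \<Psi> \<and> (\<forall>w\<in>\<Omega>2. \<Psi> w \<in> \<Omega>1 \<and> \<Phi> (\<Psi> w) = w) \<and>
          (\<forall>z\<in>\<Omega>1. \<Psi> (\<Phi> z) = z)) \<and>
     (\<forall>z\<in>\<Omega>1. jac \<Phi> z > 0)"

definition quad_eq_on :: "complex set \<Rightarrow> quad \<Rightarrow> quad \<Rightarrow> bool" where
  "quad_eq_on \<Omega> D E \<longleftrightarrow> (\<forall>z\<in>\<Omega>.
     fst D z = fst E z \<and> fst (snd D) z = fst (snd E) z \<and>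
     fst (snd (snd D)) z = fst (snd (snd E)) z \<and> snd (snd (snd D)) z = snd (snd (snd E)) z)"

text \<open>Elements of the disjoint union of all BV(Omega): pairs (Omega, D).\<close>
definition gauge_rel :: "complex set \<times> quad \<Rightarrow> complex set \<times> quad \<Rightarrow> bool" where
  "gauge_rel X Y \<longleftrightarrow> (case X of (\<Omega>1, D1) \<Rightarrow> case Y of (\<Omega>2, D2) \<Rightarrow>
     is_domain \<Omega>1 \<and> \<Omega>1 = \<Omega>2 \<and> BV \<Omega>1 D1 \<and> BV \<Omega>2 D2 \<and>
     (\<exists>\<phi>. C1_on \<Omega>1 \<phi> \<and> (\<forall>z\<in>\<Omega>1. \<phi> z \<noteq> 0) \<and> quad_eq_on \<Omega>1 (gauge_act \<phi> D1) D2))"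

definition diffeo_rel :: "complex set \<times> quad \<Rightarrow> complex set \<times> quad \<Rightarrow> bool" where
  "diffeo_rel X Y \<longleftrightarrow> (case X of (\<Omega>1, D1) \<Rightarrow> case Y of (\<Omega>2, D2) \<Rightarrow>
     is_domain \<Omega>1 \<and> is_domain \<Omega>2 \<and> BV \<Omega>1 D1 \<and> BV \<Omega>2 D2 \<and>
     (\<exists>\<Phi>. diffeo \<Omega>1 \<Omega>2 \<Phi> \<and> quad_eq_on \<Omega>1 D1 (pullback \<Phi> D2)))"

definition bv_equiv :: "complex set \<times> quad \<Rightarrow> complex set \<times> quad \<Rightarrow> bool" where
  "bv_equiv = equivclp (\<lambda>X Y. gauge_rel X Y \<or> diffeo_rel X Y)"

definition mass :: "complex set \<Rightarrow> quad \<Rightarrow> ennreal" where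
  "mass \<Omega> D = (case D of (\<mu>, A, B, F) \<Rightarrow>
     (\<integral>\<^sup>+ z. ennreal (indicator \<Omega> z * ((cmod (B z))\<^sup>2 / (1 - (cmod (\<mu> z))\<^sup>2))) \<partial>lebesgue))"

end

theory Submission
  imports Defs
begin

definition ec :: "real^2 \<Rightarrow> complex" where "ec x = Complex (x$1) (x$2)"
definition ce :: "complex \<Rightarrow> real^2" where "ce z = vector [Re z, Im z]"

lemma ec_ce[simp]: "ec (ce z) = z" by (simp add: ec_def ce_def)
lemma ce_ec[simp]: "ce (ec x) = x"
  by (simp add: ec_def ce_def vec_eq_iff forall_2)

lemma linear_ec: "bounded_linear ec"
  by (rule bounded_linearI') (auto simp: ec_def complex_eq_iff)
lemma linear_ce: "bounded_linear ce"
  by (rule bounded_linearI') (auto simp: ce_def vec_eq_iff forall_2)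

lemma ec_axis1[simp]: "ec (axis 1 1) = 1" by (simp add: ec_def axis_def complex_eq_iff)
lemma ec_axis2[simp]: "ec (axis 2 1) = \<i>" by (simp add: ec_def axis_def complex_eq_iff)

lemma ec_meas[measurable]: "ec \<in> borel_measurable borel"
  by (intro borel_measurable_continuous_onI linear_continuous_on linear_ec)

lemma Basis_2: "(Basis :: (real^2) set) = {axis 1 1, axis 2 1}"
  by (auto simp: Basis_vec_def UNIV_2)

lemma prod_Basis_2: "(\<Prod>b\<in>(Basis::(real^2) set). f b) = f (axis 1 1) * f (axis 2 1)"
  unfolding Basis_2 by (simp add: axis_eq_axis)

lemma distr_ec: "distr lborel borel ec = lborel"
proof (rule lborel_eqI[symmetric])
  fix l u :: complex
  assume le: "\<And>b. b \<in> Basis \<Longrightarrow> l \<bullet> b \<le> u \<bullet> b"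
  have pre: "ec -` box l u = box (ce l) (ce u)"
    by (auto simp: mem_box_cart mem_box Basis_complex_def ec_def ce_def forall_2)
  have "emeasure (distr lborel borel ec) (box l u) = emeasure lborel (box (ce l) (ce u))"
    by (simp add: emeasure_distr pre)
  also have "\<dots> = (\<Prod>b\<in>Basis. (u - l) \<bullet> b)"
  proof -
    have "Re l \<le> Re u" "Im l \<le> Im u" using le[of 1] le[of \<i>] by (auto simp: Basis_complex_def)
    moreover have "\<forall>b\<in>Basis. ce l \<bullet> b \<le> ce u \<bullet> b"
      using calculation by (simp add: Basis_2 ce_def inner_axis cart_eq_inner_axis[symmetric])
    ultimately show ?thesis
      by (simp add: emeasure_lborel_box_eq prod_Basis_2 Basis_complex_def ce_def inner_axis
       ennreal_mult[symmetric] inner_complex_def cart_eq_inner_axis[symmetric])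
  qed
  finally show "emeasure (distr lborel borel ec) (box l u) = (\<Prod>b\<in>Basis. (u - l) \<bullet> b)" .
qed simp

lemma nn_ec:
  assumes "f \<in> borel_measurable borel"
  shows "(\<integral>\<^sup>+x. f (ec x) \<partial>lborel) = (\<integral>\<^sup>+z. f z \<partial>lborel)"
proof -
  have "(\<integral>\<^sup>+z. f z \<partial>lborel) = (\<integral>\<^sup>+z. f z \<partial>distr lborel borel ec)"
    by (simp add: distr_ec)
  also have "\<dots> = (\<integral>\<^sup>+x. f (ec x) \<partial>lborel)"
    using assms by (simp add: nn_integral_distr)
  finally show ?thesis by simp
qed

lemma nn_le_from_hasint:
  fixes h1 h2 :: "'a::euclidean_space \<Rightarrow> real"
  assumes "\<And>x. 0 \<le> h1 x" "\<And>x. 0 \<le> h2 x"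
    and "h1 \<in> borel_measurable lebesgue"
    and "\<And>b. (h1 has_integral b) UNIV \<Longrightarrow> (h2 has_integral b) UNIV"
    and "(\<integral>\<^sup>+x. h1 x \<partial>lebesgue) \<noteq> \<infinity>"
  shows "(\<integral>\<^sup>+x. h1 x \<partial>lebesgue) = (\<integral>\<^sup>+x. h2 x \<partial>lebesgue)"
proof -
  obtain r where r: "(\<integral>\<^sup>+x. h1 x \<partial>lebesgue) = ennreal r" "0 \<le> r"
    using assms(5) by (cases "(\<integral>\<^sup>+x. h1 x \<partial>lebesgue)") auto
  have "(h1 has_integral r) UNIV"
    using has_integral_iff_nn_integral_lebesgue[of h1 r] assms r by auto
  then have "(h2 has_integral r) UNIV" using assms by auto
  then have "(\<integral>\<^sup>+x. h2 x \<partial>lebesgue) = ennreal r"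
    using has_integral_iff_nn_integral_lebesgue[of h2 r] assms by auto
  with r show ?thesis by simp
qed

lemma nn_eq_from_hasint:
  fixes h1 h2 :: "'a::euclidean_space \<Rightarrow> real"
  assumes "\<And>x. 0 \<le> h1 x" "\<And>x. 0 \<le> h2 x"
    and "h1 \<in> borel_measurable lebesgue" "h2 \<in> borel_measurable lebesgue"
    and "\<And>b. (h1 has_integral b) UNIV \<longleftrightarrow> (h2 has_integral b) UNIV"
  shows "(\<integral>\<^sup>+x. h1 x \<partial>lebesgue) = (\<integral>\<^sup>+x. h2 x \<partial>lebesgue)"
proof (cases "(\<integral>\<^sup>+x. h1 x \<partial>lebesgue) = \<infinity>")
  case True
  show ?thesis
  proof (cases "(\<integral>\<^sup>+x. h2 x \<partial>lebesgue) = \<infinity>")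
    case False
    then show ?thesis using nn_le_from_hasint[of h2 h1] assms by auto
  qed (use True in simp)
next
  case False
  then show ?thesis using nn_le_from_hasint[of h1 h2] assms by auto
qed

lemma jac_formula:
  fixes p q :: complex
  shows "(cmod ((p - \<i> * q) / 2))\<^sup>2 - (cmod ((p + \<i> * q) / 2))\<^sup>2 = Re p * Im q - Re q * Im p"
proof -
  have "\<And>w::complex. (cmod (w / 2))\<^sup>2 = ((Re w)\<^sup>2 + (Im w)\<^sup>2) / 4"
    by (simp add: norm_divide cmod_power2 power_divide)
  then show ?thesis by (simp add: power2_eq_square field_simps)
qed

lemma det_jac:
  shows "det (matrix (ce \<circ> L \<circ> ec)) = Re (L 1) * Im (L \<i>) - Re (L \<i>) * Im (L 1)"
  by (simp add: det_2 matrix_def ce_def)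

lemma jac_eq: "jac \<Phi> z = Re (frechet_derivative \<Phi> (at z) 1) * Im (frechet_derivative \<Phi> (at z) \<i>)
   - Re (frechet_derivative \<Phi> (at z) \<i>) * Im (frechet_derivative \<Phi> (at z) 1)"
  unfolding jac_def dz_def dzb_def pdx_def pdy_def by (rule jac_formula)

lemma inv_deriv:
  assumes "open \<Omega>1" "z \<in> \<Omega>1" "\<Phi> differentiable (at z)" "\<Psi> differentiable (at (\<Phi> z))"
    and "\<And>x. x \<in> \<Omega>1 \<Longrightarrow> \<Psi> (\<Phi> x) = x"
  shows "frechet_derivative \<Psi> (at (\<Phi> z)) \<circ> frechet_derivative \<Phi> (at z) = id"
proof -
  have "((\<Psi> \<circ> \<Phi>) has_derivative (frechet_derivative \<Psi> (at (\<Phi> z)) \<circ> frechet_derivative \<Phi> (at z))) (at z)"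
    using assms(3,4) by (intro diff_chain_at) (simp_all add: frechet_derivative_works[symmetric])
  then have "((\<lambda>x. x) has_derivative (frechet_derivative \<Psi> (at (\<Phi> z)) \<circ> frechet_derivative \<Phi> (at z))) (at z)"
    by (rule has_derivative_transform_within_open[OF _ assms(1,2)]) (simp add: assms(5))
  moreover have "((\<lambda>x. x) has_derivative id) (at z)"
    by (simp add: has_derivative_ident id_def)
  ultimately show ?thesis using has_derivative_unique by blast
qed

lemma cov_complex:
  fixes g F1 :: "complex \<Rightarrow> real"
  assumes o1: "open \<Omega>1" and o2: "open \<Omega>2"
    and dPhi: "\<And>z. z \<in> \<Omega>1 \<Longrightarrow> \<Phi> differentiable (at z)"
    and dPsi: "\<And>w. w \<in> \<Omega>2 \<Longrightarrow> \<Psi> differentiable (at w)"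
    and PhiPsi: "\<And>w. w \<in> \<Omega>2 \<Longrightarrow> \<Psi> w \<in> \<Omega>1 \<and> \<Phi> (\<Psi> w) = w"
    and PsiPhi: "\<And>z. z \<in> \<Omega>1 \<Longrightarrow> \<Phi> z \<in> \<Omega>2 \<and> \<Psi> (\<Phi> z) = z"
    and g0: "\<And>w. w \<in> \<Omega>2 \<Longrightarrow> 0 \<le> g w"
    and gc: "continuous_on \<Omega>2 g" and Fc: "continuous_on \<Omega>1 F1"
    and F1eq: "\<And>z. z \<in> \<Omega>1 \<Longrightarrow> F1 z = \<bar>jac \<Phi> z\<bar> * g (\<Phi> z)"
  shows "(\<integral>\<^sup>+z. ennreal (indicator \<Omega>1 z * F1 z) \<partial>lebesgue) = (\<integral>\<^sup>+z. ennreal (indicator \<Omega>2 z * g z) \<partial>lebesgue)"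
proof -
  define h1 where "h1 = (\<lambda>z. indicator \<Omega>1 z * F1 z)"
  define h2 where "h2 = (\<lambda>z. indicator \<Omega>2 z * g z)"
  have m1: "h1 \<in> borel_measurable borel"
    unfolding h1_def using borel_measurable_continuous_on_indicator[OF _ Fc] o1 by simp
  have m2: "h2 \<in> borel_measurable borel"
    unfolding h2_def using borel_measurable_continuous_on_indicator[OF _ gc] o2 by simp
  have n1: "0 \<le> h1 z" for z using F1eq[of z] g0[of "\<Phi> z"] PsiPhi[of z] by (simp add: h1_def indicator_def)
  have n2: "0 \<le> h2 z" for z using g0[of z] by (simp add: h2_def indicator_def)
  have tr: "(\<integral>\<^sup>+z. ennreal (h z) \<partial>lebesgue) = (\<integral>\<^sup>+x. ennreal (h (ec x)) \<partial>lebesgue)"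
    if "h \<in> borel_measurable borel" for h :: "complex \<Rightarrow> real"
  proof -
    have "(\<integral>\<^sup>+z. ennreal (h z) \<partial>lebesgue) = (\<integral>\<^sup>+z. ennreal (h z) \<partial>lborel)"
      using that by (simp add: nn_integral_completion)
    also have "\<dots> = (\<integral>\<^sup>+x. ennreal (h (ec x)) \<partial>lborel)"
      by (rule nn_ec[symmetric]) (use that in simp)
    also have "\<dots> = (\<integral>\<^sup>+x. ennreal (h (ec x)) \<partial>lebesgue)"
      using that by (simp add: nn_integral_completion)
    finally show ?thesis .
  qed
  define L where "L = (\<lambda>z. frechet_derivative \<Phi> (at z))"
  define M where "M = (\<lambda>w. frechet_derivative \<Psi> (at w))"
  define G where "G = ce \<circ> \<Phi> \<circ> ec"
  define H where "H = ce \<circ> \<Psi> \<circ> ec"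
  define G' where "G' = (\<lambda>x. ce \<circ> L (ec x) \<circ> ec)"
  define H' where "H' = (\<lambda>x. ce \<circ> M (ec x) \<circ> ec)"
  define S1 where "S1 = ec -` \<Omega>1"
  define S2 where "S2 = ec -` \<Omega>2"
  have hec: "(ec has_derivative ec) (at x)" for x using linear_ec by (rule bounded_linear_imp_has_derivative)
  have hce: "(ce has_derivative ce) (at x)" for x using linear_ce by (rule bounded_linear_imp_has_derivative)
  have dG: "(G has_derivative G' x) (at x within S1)" if "x \<in> S1" for x
  proof -
    have "(\<Phi> has_derivative L (ec x)) (at (ec x))"
      using dPhi[of "ec x"] that by (simp add: S1_def L_def frechet_derivative_works[symmetric])
    then have "((\<Phi> \<circ> ec) has_derivative (L (ec x) \<circ> ec)) (at x)"
      by (rule diff_chain_at[OF hec])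
    then have "((ce \<circ> (\<Phi> \<circ> ec)) has_derivative (ce \<circ> (L (ec x) \<circ> ec))) (at x)"
      by (rule diff_chain_at[OF _ hce])
    then show ?thesis unfolding G_def G'_def by (simp add: o_assoc has_derivative_at_withinI)
  qed
  have dH: "(H has_derivative H' y) (at y within S2)" if "y \<in> S2" for y
  proof -
    have "(\<Psi> has_derivative M (ec y)) (at (ec y))"
      using dPsi[of "ec y"] that by (simp add: S2_def M_def frechet_derivative_works[symmetric])
    then have "((\<Psi> \<circ> ec) has_derivative (M (ec y) \<circ> ec)) (at y)"
      by (rule diff_chain_at[OF hec])
    then have "((ce \<circ> (\<Psi> \<circ> ec)) has_derivative (ce \<circ> (M (ec y) \<circ> ec))) (at y)"
      by (rule diff_chain_at[OF _ hce])
    then show ?thesis unfolding H_def H'_def by (simp add: o_assoc has_derivative_at_withinI)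
  qed
  have idH: "H' y \<circ> G' (H y) = id" if "y \<in> S2" for y
  proof -
    let ?z = "\<Psi> (ec y)"
    have z: "?z \<in> \<Omega>1" "\<Phi> ?z = ec y" using PhiPsi[of "ec y"] that by (auto simp: S2_def)
    have "M (\<Phi> ?z) \<circ> L ?z = id"
      unfolding M_def L_def
      by (rule inv_deriv[OF o1 z(1) dPhi[OF z(1)] dPsi]) (use z PsiPhi that in \<open>auto simp: S2_def\<close>)
    then have "M (ec y) \<circ> L ?z = id" using z by simp
    then show ?thesis
      unfolding H'_def G'_def H_def by (simp add: fun_eq_iff o_def)
  qed
  have detG: "det (matrix (G' x)) = jac \<Phi> (ec x)" for x
    unfolding G'_def L_def jac_eq by (rule det_jac)
  have key: "(h1 \<circ> ec has_integral b) UNIV \<longleftrightarrow> (h2 \<circ> ec has_integral b) UNIV" for b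
  proof -
    have "(h1 \<circ> ec has_integral b) UNIV \<longleftrightarrow> ((\<lambda>x. if x \<in> S1 then \<bar>det (matrix (G' x))\<bar> * (g \<circ> ec) (G x) else 0) has_integral b) UNIV"
      by (intro has_integral_cong) (auto simp: h1_def S1_def detG G_def F1eq)
    also have "\<dots> \<longleftrightarrow> ((\<lambda>x. \<bar>det (matrix (G' x))\<bar> * (g \<circ> ec) (G x)) has_integral b) S1"
      by (rule has_integral_restrict_UNIV)
    also have "\<dots> \<longleftrightarrow> ((g \<circ> ec) has_integral b) S2"
    proof (rule cov_invertible_nonneg_eq[OF dG dH])
      show "0 \<le> (g \<circ> ec) y" if "y \<in> S2" for y using that g0 by (simp add: S2_def)
      show "G x \<in> S2 \<and> H (G x) = x" if "x \<in> S1" for x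
        using that PsiPhi[of "ec x"] by (simp add: S1_def S2_def G_def H_def)
      show "H y \<in> S1 \<and> G (H y) = y" if "y \<in> S2" for y
        using that PhiPsi[of "ec y"] by (simp add: S1_def S2_def G_def H_def)
    qed (use idH in auto)
    also have "\<dots> \<longleftrightarrow> ((\<lambda>x. if x \<in> S2 then (g \<circ> ec) x else 0) has_integral b) UNIV"
      by (rule has_integral_restrict_UNIV[symmetric])
    also have "\<dots> \<longleftrightarrow> (h2 \<circ> ec has_integral b) UNIV"
      by (intro has_integral_cong) (auto simp: h2_def S2_def)
    finally show ?thesis .
  qed
  have "(\<integral>\<^sup>+x. ennreal ((h1 \<circ> ec) x) \<partial>lebesgue) = (\<integral>\<^sup>+x. ennreal ((h2 \<circ> ec) x) \<partial>lebesgue)"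
  proof (rule nn_eq_from_hasint[OF _ _ _ _ key])
    show "h1 \<circ> ec \<in> borel_measurable lebesgue" "h2 \<circ> ec \<in> borel_measurable lebesgue"
      using m1 m2 by (auto intro!: measurable_completion measurable_comp[OF ec_meas])
  qed (simp_all add: n1 n2)
  then show ?thesis
    using tr[OF m1] tr[OF m2] unfolding h1_def h2_def by (simp add: o_def)
qed

lemma equivclp_inv:
  assumes "equivclp r x y" "\<And>a b. r a b \<Longrightarrow> f a = f b"
  shows "f x = f y"
proof -
  have "(symclp r)\<^sup>*\<^sup>* x y" using assms(1) by (simp add: equivclp_def)
  then show ?thesis
  proof (induction rule: rtranclp_induct)
    case (step y z)
    then show ?case using assms(2) by (auto simp: symclp_def)
  qed simp
qed

lemma norm_sq_identity:
  fixes a b m :: complex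
  shows "(cmod (a + m * cnj b))\<^sup>2 - (cmod (b + m * cnj a))\<^sup>2 = ((cmod a)\<^sup>2 - (cmod b)\<^sup>2) * (1 - (cmod m)\<^sup>2)"
  unfolding cmod_power2 by (simp add: power2_eq_square algebra_simps)

lemma pull_alg:
  fixes a b m B :: complex and J :: real
  assumes J: "J = (cmod a)\<^sup>2 - (cmod b)\<^sup>2" "J > 0" and m: "cmod m < 1"
  shows "(cmod (of_real J * B / (a + m * cnj b)))\<^sup>2 / (1 - (cmod ((b + m * cnj a) / (a + m * cnj b)))\<^sup>2)
     = \<bar>J\<bar> * (cmod B)\<^sup>2 / (1 - (cmod m)\<^sup>2)"
proof -
  define K where "K = a + m * cnj b"
  define N where "N = b + m * cnj a"
  have m1: "0 < 1 - (cmod m)\<^sup>2" using m by (simp add: abs_square_less_1)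
  have id: "(cmod K)\<^sup>2 - (cmod N)\<^sup>2 = J * (1 - (cmod m)\<^sup>2)"
    unfolding K_def N_def J by (rule norm_sq_identity)
  have "0 < J * (1 - (cmod m)\<^sup>2)" using J m1 by simp
  then have Kp: "0 < (cmod K)\<^sup>2" using id by (smt (verit) zero_le_power2)
  then have K0: "K \<noteq> 0" by auto
  have "(cmod (of_real J * B / K))\<^sup>2 / (1 - (cmod (N / K))\<^sup>2)
      = (J\<^sup>2 * (cmod B)\<^sup>2 / (cmod K)\<^sup>2) / (((cmod K)\<^sup>2 - (cmod N)\<^sup>2) / (cmod K)\<^sup>2)"
    using Kp by (simp add: norm_divide norm_mult power_divide power_mult_distrib diff_divide_distrib)
  also have "\<dots> = J\<^sup>2 * (cmod B)\<^sup>2 / (J * (1 - (cmod m)\<^sup>2))"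
    using Kp id by (simp add: field_simps)
  also have "\<dots> = \<bar>J\<bar> * (cmod B)\<^sup>2 / (1 - (cmod m)\<^sup>2)"
    using J(2) m1 by (simp add: power2_eq_square field_simps)
  finally show ?thesis unfolding K_def N_def .
qed

lemma mass_gauge:
  assumes "gauge_rel (\<Omega>1, D1) (\<Omega>2, D2)"
  shows "mass \<Omega>1 D1 = mass \<Omega>2 D2"
proof -
  obtain \<mu> A B F where D1: "D1 = (\<mu>, A, B, F)" by (cases D1) auto
  obtain \<mu>' A' B' F' where D2: "D2 = (\<mu>', A', B', F')" by (cases D2) auto
  from assms obtain \<phi> where eq: "\<Omega>1 = \<Omega>2" and nz: "\<forall>z\<in>\<Omega>1. \<phi> z \<noteq> 0"
    and q: "quad_eq_on \<Omega>1 (gauge_act \<phi> D1) D2"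
    by (auto simp: gauge_rel_def)
  have pt: "indicator \<Omega>1 z * ((cmod (B z))\<^sup>2 / (1 - (cmod (\<mu> z))\<^sup>2))
      = indicator \<Omega>1 z * ((cmod (B' z))\<^sup>2 / (1 - (cmod (\<mu>' z))\<^sup>2))" for z
  proof (cases "z \<in> \<Omega>1")
    case True
    then have "\<mu>' z = \<mu> z" "B' z = B z * \<phi> z / cnj (\<phi> z)"
      using q by (auto simp: quad_eq_on_def gauge_act_def D1 D2)
    moreover have "cmod (B z * \<phi> z / cnj (\<phi> z)) = cmod (B z)"
      using nz True by (simp add: norm_mult norm_divide)
    ultimately show ?thesis by simp
  qed simp
  show ?thesis unfolding mass_def D1 D2 eq[symmetric] using pt by simp
qed

lemma one_minus_pos: "cmod m < 1 \<Longrightarrow> 0 < 1 - (cmod m)\<^sup>2"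
  by (simp add: abs_square_less_1)

lemma cont_dens:
  assumes "continuous_on \<Omega> \<mu>" "continuous_on \<Omega> B" "\<forall>z\<in>\<Omega>. cmod (\<mu> z) < 1"
  shows "continuous_on \<Omega> (\<lambda>z. (cmod (B z))\<^sup>2 / (1 - (cmod (\<mu> z))\<^sup>2))"
proof -
  have "\<forall>z\<in>\<Omega>. 1 - (cmod (\<mu> z))\<^sup>2 \<noteq> 0"
    using assms(3) one_minus_pos by force
  then show ?thesis using assms(1,2) by (intro continuous_intros) auto
qed

lemma mass_diffeo:
  assumes "diffeo_rel (\<Omega>1, D1) (\<Omega>2, D2)"
  shows "mass \<Omega>1 D1 = mass \<Omega>2 D2"
proof -
  obtain \<mu> A B F where D1: "D1 = (\<mu>, A, B, F)" by (cases D1) auto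
  obtain \<mu>' A' B' F' where D2: "D2 = (\<mu>', A', B', F')" by (cases D2) auto
  from assms obtain \<Phi> where d1: "is_domain \<Omega>1" and d2: "is_domain \<Omega>2"
    and bv1: "BV \<Omega>1 D1" and bv2: "BV \<Omega>2 D2" and dif: "diffeo \<Omega>1 \<Omega>2 \<Phi>"
    and q: "quad_eq_on \<Omega>1 D1 (pullback \<Phi> D2)"
    by (auto simp: diffeo_rel_def)
  have o1: "open \<Omega>1" and o2: "open \<Omega>2" using d1 d2 by (auto simp: is_domain_def)
  from dif obtain \<Psi> where bij: "bij_betw \<Phi> \<Omega>1 \<Omega>2" and c1: "C1_on \<Omega>1 \<Phi>"
    and c2: "C1_on \<Omega>2 \<Psi>" and PhiPsi: "\<And>w. w \<in> \<Omega>2 \<Longrightarrow> \<Psi> w \<in> \<Omega>1 \<and> \<Phi> (\<Psi> w) = w"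
    and PsiPhi0: "\<And>z. z \<in> \<Omega>1 \<Longrightarrow> \<Psi> (\<Phi> z) = z" and J: "\<And>z. z \<in> \<Omega>1 \<Longrightarrow> jac \<Phi> z > 0"
    unfolding diffeo_def by blast
  have PsiPhi: "\<Phi> z \<in> \<Omega>2 \<and> \<Psi> (\<Phi> z) = z" if "z \<in> \<Omega>1" for z
    using bij that PsiPhi0 by (auto simp: bij_betw_def)
  have dPhi: "\<Phi> differentiable (at z)" if "z \<in> \<Omega>1" for z
    using c1 o1 that by (auto simp: C1_on_def differentiable_on_eq_differentiable_at)
  have dPsi: "\<Psi> differentiable (at z)" if "z \<in> \<Omega>2" for z
    using c2 o2 that by (auto simp: C1_on_def differentiable_on_eq_differentiable_at)
  have bv1': "continuous_on \<Omega>1 \<mu>" "continuous_on \<Omega>1 B" "\<forall>z\<in>\<Omega>1. cmod (\<mu> z) < 1"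
    using bv1 by (auto simp: BV_def D1)
  have bv2': "continuous_on \<Omega>2 \<mu>'" "continuous_on \<Omega>2 B'" "\<forall>z\<in>\<Omega>2. cmod (\<mu>' z) < 1"
    using bv2 by (auto simp: BV_def D2)
  have "(\<integral>\<^sup>+z. ennreal (indicator \<Omega>1 z * ((cmod (B z))\<^sup>2 / (1 - (cmod (\<mu> z))\<^sup>2))) \<partial>lebesgue)
      = (\<integral>\<^sup>+z. ennreal (indicator \<Omega>2 z * ((cmod (B' z))\<^sup>2 / (1 - (cmod (\<mu>' z))\<^sup>2))) \<partial>lebesgue)"
  proof (rule cov_complex[OF o1 o2 dPhi dPsi PhiPsi PsiPhi])
    show "0 \<le> (cmod (B' w))\<^sup>2 / (1 - (cmod (\<mu>' w))\<^sup>2)" if "w \<in> \<Omega>2" for w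
      using one_minus_pos[of "\<mu>' w"] bv2'(3) that by simp
    show "continuous_on \<Omega>2 (\<lambda>z. (cmod (B' z))\<^sup>2 / (1 - (cmod (\<mu>' z))\<^sup>2))"
      using bv2' by (rule cont_dens)
    show "continuous_on \<Omega>1 (\<lambda>z. (cmod (B z))\<^sup>2 / (1 - (cmod (\<mu> z))\<^sup>2))"
      using bv1' by (rule cont_dens)
    show "(cmod (B z))\<^sup>2 / (1 - (cmod (\<mu> z))\<^sup>2) = \<bar>jac \<Phi> z\<bar> * ((cmod (B' (\<Phi> z)))\<^sup>2 / (1 - (cmod (\<mu>' (\<Phi> z)))\<^sup>2))"
      if z: "z \<in> \<Omega>1" for z
    proof -
      have e1: "\<mu> z = (dzb \<Phi> z + \<mu>' (\<Phi> z) * cnj (dz \<Phi> z)) / (dz \<Phi> z + \<mu>' (\<Phi> z) * cnj (dzb \<Phi> z))"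
        and e2: "B z = of_real (jac \<Phi> z) * B' (\<Phi> z) / (dz \<Phi> z + \<mu>' (\<Phi> z) * cnj (dzb \<Phi> z))"
        using q z by (auto simp: quad_eq_on_def pullback_def D1 D2 Let_def)
      have "cmod (\<mu>' (\<Phi> z)) < 1" using bv2'(3) PsiPhi[OF z] by auto
      from pull_alg[OF jac_def J[OF z] this, of "B' (\<Phi> z)"]
      show ?thesis unfolding e1 e2 by (simp only: times_divide_eq_right)
    qed
  qed
  then show ?thesis unfolding mass_def D1 D2 by simp
qed

theorem theorem9p2:
  assumes "is_domain \<Omega>1" and "BV \<Omega>1 D1"
    and "is_domain \<Omega>2" and "BV \<Omega>2 D2"
    and "bv_equiv (\<Omega>1, D1) (\<Omega>2, D2)"
  shows "mass \<Omega>1 D1 = mass \<Omega>2 D2"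
proof -
  have "(\<lambda>X. mass (fst X) (snd X)) (\<Omega>1, D1) = (\<lambda>X. mass (fst X) (snd X)) (\<Omega>2, D2)"
  proof (rule equivclp_inv[OF assms(5)[unfolded bv_equiv_def]])
    fix X Y assume "gauge_rel X Y \<or> diffeo_rel X Y"
    then show "mass (fst X) (snd X) = mass (fst Y) (snd Y)"
      using mass_gauge[of "fst X" "snd X" "fst Y" "snd Y"] mass_diffeo[of "fst X" "snd X" "fst Y" "snd Y"]
      by auto
  qed
  then show ?thesis by simp
qed

end
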